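(* Let $G$ be a cycle of cliques. Then $Z_+(G)\le |V(G)|-\operatorname{cc}(G)+2$.
   Context: $\operatorname{cc}(G)$ is the minimum number of cliques needed to cover all edges of $G$. A min-max clique covering is a clique covering of size $\operatorname{cc}(G)$ consisting of maximal cliques. $G$ is a cycle of cliques if it has a min-max clique covering $\{C_1,\dots,C_\ell\}$ such that $C_i\cap C_{i+1}\neq\emptyset$ for $i=1,\dots,\ell-1$ and $C_1\cap C_\ell\neq\emptyset$, while all other pairwise intersections $C_i\cap C_j$ are empty. $Z_+(G)$ is the positive zero forcing number: the minimum size of a set $B$ of initially black vertices such that repeated application of the rule "let $W_1,\dots,W_k$ be the vertex sets of components of $G$ minus the black vertices; a black vertex $u$ whose only white neighbour in the subgraph induced by $W_i\cup(\text{black vertices})$ is $w$ may turn $w$ black" eventually makes all vertices black. *)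

theory Defs
  imports Main
begin

definition graph :: "'a set \<Rightarrow> 'a set set \<Rightarrow> bool" where
  "graph V E \<longleftrightarrow> finite V \<and> (\<forall>e\<in>E. e \<subseteq> V \<and> card e = 2)"

definition clique :: "'a set \<Rightarrow> 'a set set \<Rightarrow> 'a set \<Rightarrow> bool" where
  "clique V E C \<longleftrightarrow> C \<subseteq> V \<and> (\<forall>u\<in>C. \<forall>v\<in>C. u \<noteq> v \<longrightarrow> {u, v} \<in> E)"

definition maximal_clique :: "'a set \<Rightarrow> 'a set set \<Rightarrow> 'a set \<Rightarrow> bool" where
  "maximal_clique V E C \<longleftrightarrow> clique V E C \<and> (\<forall>D. clique V E D \<and> C \<subseteq> D \<longrightarrow> D = C)"

definition clique_covering :: "'a set \<Rightarrow> 'a set set \<Rightarrow> 'a set set \<Rightarrow> bool" where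
  "clique_covering V E \<C> \<longleftrightarrow> finite \<C> \<and> (\<forall>C\<in>\<C>. clique V E C) \<and> (\<forall>e\<in>E. \<exists>C\<in>\<C>. e \<subseteq> C)"

definition cc :: "'a set \<Rightarrow> 'a set set \<Rightarrow> nat" where
  "cc V E = (LEAST k. \<exists>\<C>. clique_covering V E \<C> \<and> card \<C> = k)"

definition cycle_of_cliques :: "'a set \<Rightarrow> 'a set set \<Rightarrow> bool" where
  "cycle_of_cliques V E \<longleftrightarrow>
     (\<exists>Cs. Cs \<noteq> [] \<and> distinct Cs \<and> length Cs = cc V E \<and>
        clique_covering V E (set Cs) \<and> (\<forall>C\<in>set Cs. maximal_clique V E C) \<and>
        (\<forall>i<length Cs. \<forall>j<length Cs. i \<noteq> j \<longrightarrow>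
            (Cs ! i \<inter> Cs ! j \<noteq> {} \<longleftrightarrow>
               (j = Suc i mod length Cs \<or> i = Suc j mod length Cs))))"

definition white_comp :: "'a set \<Rightarrow> 'a set set \<Rightarrow> 'a set \<Rightarrow> 'a \<Rightarrow> 'a set" where
  "white_comp V E B w =
     {x. (\<lambda>a b. a \<in> V - B \<and> b \<in> V - B \<and> {a, b} \<in> E)\<^sup>*\<^sup>* w x}"

text \<open>Positive semidefinite forcing rule: black u forces white w if w is the only white
  neighbour of u in the subgraph induced by (component of w) \<union> B.\<close>
definition psd_force :: "'a set \<Rightarrow> 'a set set \<Rightarrow> 'a set \<Rightarrow> 'a \<Rightarrow> bool" where
  "psd_force V E B w \<longleftrightarrow> w \<in> V - B \<and>
     (\<exists>u\<in>B. {x \<in> white_comp V E B w. {u, x} \<in> E} = {w})"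

definition psd_step :: "'a set \<Rightarrow> 'a set set \<Rightarrow> 'a set \<Rightarrow> 'a set \<Rightarrow> bool" where
  "psd_step V E B B' \<longleftrightarrow> (\<exists>w. psd_force V E B w \<and> B' = insert w B)"

definition positive_zero_forcing_set :: "'a set \<Rightarrow> 'a set set \<Rightarrow> 'a set \<Rightarrow> bool" where
  "positive_zero_forcing_set V E B \<longleftrightarrow> B \<subseteq> V \<and> (psd_step V E)\<^sup>*\<^sup>* B V"

definition Zplus :: "'a set \<Rightarrow> 'a set set \<Rightarrow> nat" where
  "Zplus V E = (LEAST k. \<exists>B. positive_zero_forcing_set V E B \<and> card B = k)"

end

theory Submission
  imports Defs
begin

lemma white_comp_sub: "white_comp V E B w \<subseteq> insert w (V - B)"
proof
  fix x assume "x \<in> white_comp V E B w"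
  hence "(\<lambda>a b. a \<in> V - B \<and> b \<in> V - B \<and> {a, b} \<in> E)\<^sup>*\<^sup>* w x"
    by (simp add: white_comp_def)
  thus "x \<in> insert w (V - B)"
    by (induction rule: rtranclp_induct) auto
qed

lemma white_comp_self: "w \<in> white_comp V E B w"
  by (simp add: white_comp_def)

lemma chain:
  assumes "set ws \<subseteq> V" "distinct ws"
    "\<forall>k<length ws. \<exists>u\<in>V - set (drop k ws). {x \<in> set (drop k ws). {u,x}\<in>E} = {ws!k}"
  shows "(psd_step V E)\<^sup>*\<^sup>* (V - set ws) V"
  using assms
proof (induction ws)
  case Nil
  then show ?case by simp
next
  case (Cons x ws)
  have IH: "(psd_step V E)\<^sup>*\<^sup>* (V - set ws) V"
  proof (rule Cons.IH)
    show "set ws \<subseteq> V" "distinct ws" using Cons.prems by auto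
    show "\<forall>k<length ws. \<exists>u\<in>V - set (drop k ws). {x \<in> set (drop k ws). {u,x}\<in>E} = {ws!k}"
    proof (intro allI impI)
      fix k assume "k < length ws"
      with Cons.prems(3) have "\<exists>u\<in>V - set (drop (Suc k) (x#ws)). {y \<in> set (drop (Suc k) (x#ws)). {u,y}\<in>E} = {(x#ws)!(Suc k)}"
        by (metis Suc_mono length_Cons)
      thus "\<exists>u\<in>V - set (drop k ws). {x \<in> set (drop k ws). {u,x}\<in>E} = {ws!k}" by simp
    qed
  qed
  define B where "B = V - set (x#ws)"
  have xV: "x \<in> V" and xn: "x \<notin> set ws" using Cons.prems by auto
  from Cons.prems(3) obtain u where u: "u \<in> V - set (x#ws)" "{y \<in> set (x#ws). {u,y}\<in>E} = {x}"
    by (metis drop0 length_greater_0_conv list.discI nth_Cons_0)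
  have VB: "V - B = set (x#ws)" using Cons.prems(1) B_def by auto
  have "{y \<in> white_comp V E B x. {u, y} \<in> E} = {x}"
  proof
    show "{y \<in> white_comp V E B x. {u, y} \<in> E} \<subseteq> {x}"
      using white_comp_sub[of V E B x] VB u(2) by auto
    show "{x} \<subseteq> {y \<in> white_comp V E B x. {u, y} \<in> E}"
      using white_comp_self[of x V E B] u(2) by auto
  qed
  hence "psd_force V E B x" unfolding psd_force_def using VB u(1) B_def by auto
  moreover have "V - set ws = insert x B" using B_def xV xn by auto
  ultimately have "psd_step V E B (V - set ws)" unfolding psd_step_def by auto
  then show ?case using IH unfolding B_def by (rule converse_rtranclp_into_rtranclp)
qed

lemma zplus_le:
  assumes "B \<subseteq> V" "(psd_step V E)\<^sup>*\<^sup>* B V"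
  shows "Zplus V E \<le> card B"
  unfolding Zplus_def positive_zero_forcing_set_def
  by (rule Least_le) (use assms in auto)

lemma no_tri:
  assumes "(n::nat) \<ge> 4" "a<n" "b<n" "c<n" "a\<noteq>b" "b\<noteq>c" "a\<noteq>c"
    "b = Suc a mod n \<or> a = Suc b mod n"
    "c = Suc b mod n \<or> b = Suc c mod n"
    "c = Suc a mod n \<or> a = Suc c mod n"
  shows False
  using assms by (auto simp: mod_Suc split: if_splits)

lemma cyc_vertices:
  assumes n: "n = length Cs" "n \<ge> 4"
    and hC: "\<forall>i<n. \<forall>j<n. i \<noteq> j \<longrightarrow>
            (Cs ! i \<inter> Cs ! j \<noteq> {} \<longleftrightarrow> (j = Suc i mod n \<or> i = Suc j mod n))"
    and cl: "\<forall>C\<in>set Cs. clique V E C"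
    and cov: "\<forall>e\<in>E. \<exists>C\<in>set Cs. e \<subseteq> C"
  shows "\<exists>ws. set ws \<subseteq> V \<and> distinct ws \<and> length ws = n - 2 \<and>
     (\<forall>k<length ws. \<exists>u\<in>V - set (drop k ws). {x \<in> set (drop k ws). {u,x}\<in>E} = {ws!k})"
proof -
  define s where "s i = Suc i mod n" for i
  have n0: "0 < n" using n(2) by simp
  have sn: "i < n \<Longrightarrow> s i < n" for i using n0 by (simp add: s_def)
  have sne: "i < n \<Longrightarrow> s i \<noteq> i" for i using n by (auto simp: s_def mod_Suc)
  define v where "v i = (SOME x. x \<in> Cs!i \<and> x \<in> Cs!(s i))" for i
  have vin: "v i \<in> Cs!i \<and> v i \<in> Cs!(s i)" if "i < n" for i
  proof -
    have "Cs!i \<inter> Cs!(s i) \<noteq> {}" using hC that sn[OF that] sne[OF that] by (auto simp: s_def)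
    then obtain x where "x \<in> Cs!i \<and> x \<in> Cs!(s i)" by auto
    thus ?thesis unfolding v_def by (rule someI)
  qed
  have vonly: "k = i \<or> k = s i" if "i < n" "k < n" "v i \<in> Cs!k" for i k
  proof (rule ccontr)
    assume a: "\<not> (k = i \<or> k = s i)"
    have 1: "k = Suc i mod n \<or> i = Suc k mod n"
      using hC that vin[OF that(1)] a by blast
    have 2: "k = Suc (s i) mod n \<or> s i = Suc k mod n"
      using hC that vin[OF that(1)] a sn[OF that(1)] by blast
    have 3: "s i = Suc i mod n \<or> i = Suc (s i) mod n" by (simp add: s_def)
    have d1: "i \<noteq> s i" using sne[OF that(1)] by simp
    have d2: "s i \<noteq> k" "i \<noteq> k" using a by auto
    have 2: "k = Suc (s i) mod n \<or> s i = Suc k mod n" using 2 .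
    show False
      by (rule no_tri[OF n(2) that(1) sn[OF that(1)] that(2) d1 d2(1) d2(2) 3 2 1])
  qed
  have sinj: "i < n \<Longrightarrow> j < n \<Longrightarrow> s i = s j \<Longrightarrow> i = j" for i j
    by (auto simp: s_def mod_Suc split: if_splits)
  have ss: "i < n \<Longrightarrow> s (s i) \<noteq> i" for i using n by (auto simp: s_def mod_Suc split: if_splits)
  have vinj: "i = j" if "i < n" "j < n" "v i = v j" for i j
  proof (rule ccontr)
    assume ne: "i \<noteq> j"
    have "j = s i" using vonly[OF that(1) that(2)] vin[OF that(2)] that(3) ne by auto
    moreover have "s j = i \<or> s j = s i" using vonly[OF that(1) sn[OF that(2)]] vin[OF that(2)] that(3) by auto
    ultimately show False using sinj[OF that(2) that(1)] ne ss[OF that(1)] by auto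
  qed
  have CV: "i < n \<Longrightarrow> Cs!i \<subseteq> V" for i using cl n(1) by (auto simp: clique_def)
  have vV: "i < n \<Longrightarrow> v i \<in> V" for i using vin CV by blast
  have vE: "{v i, v (s i)} \<in> E" if "i < n" for i
  proof -
    have "v i \<noteq> v (s i)" using vinj[OF that sn[OF that]] sne[OF that] by metis
    moreover have "clique V E (Cs!(s i))" using cl n(1) sn[OF that] by auto
    ultimately show ?thesis using vin[OF that] vin[OF sn[OF that]] unfolding clique_def by blast
  qed
  have edge: "\<exists>m<n. v i \<in> Cs!m \<and> v j \<in> Cs!m" if "{v i, v j} \<in> E" for i j
    using cov that n(1) by (metis in_set_conv_nth insert_subset)
  define ws where "ws = map v [0..<n-2]"
  have dws: "drop k ws = map v [k..<n-2]" for k by (simp add: ws_def drop_map)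
  show ?thesis
  proof (intro exI conjI)
    show "set ws \<subseteq> V" using vV by (auto simp: ws_def)
    show "distinct ws" unfolding ws_def
    proof (simp add: distinct_map)
      have "inj_on v {0..<n}" using vinj by (auto simp: inj_on_def)
      thus "inj_on v {0..<n-2}" by (rule inj_on_subset) auto
    qed
    show "length ws = n - 2" by (simp add: ws_def)
    show "\<forall>k<length ws. \<exists>u\<in>V - set (drop k ws). {x \<in> set (drop k ws). {u,x}\<in>E} = {ws!k}"
    proof (intro allI impI)
      fix k assume k: "k < length ws"
      hence kn: "k < n - 2" by (simp add: ws_def)
      define p where "p = (if k = 0 then n - 1 else k - 1)"
      have pn: "p < n" using n(2) kn by (auto simp: p_def)
      have sp: "s p = k" using n(2) kn by (auto simp: p_def s_def mod_Suc)
      have wk: "ws!k = v k" using kn by (simp add: ws_def)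
      show "\<exists>u\<in>V - set (drop k ws). {x \<in> set (drop k ws). {u,x}\<in>E} = {ws!k}"
      proof (intro bexI)
        show "v p \<in> V - set (drop k ws)"
        proof -
          have "v p \<noteq> v j" if "j \<in> {k..<n-2}" for j
          proof
            assume "v p = v j"
            hence "p = j" using vinj pn that by auto
            thus False using that p_def n(2) by (auto split: if_splits)
          qed
          hence "v p \<notin> v ` {k..<n-2}" by blast
          thus ?thesis using vV[OF pn] by (simp add: dws)
        qed
        show "{x \<in> set (drop k ws). {v p, x} \<in> E} = {ws ! k}"
        proof
          show "{ws ! k} \<subseteq> {x \<in> set (drop k ws). {v p, x} \<in> E}"
            using vE[OF pn] sp kn by (auto simp: dws wk)
          show "{x \<in> set (drop k ws). {v p, x} \<in> E} \<subseteq> {ws ! k}"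
          proof
            fix x assume "x \<in> {x \<in> set (drop k ws). {v p, x} \<in> E}"
            then obtain j where j: "j \<in> {k..<n-2}" "x = v j" "{v p, v j} \<in> E" by (auto simp: dws)
            have jn: "j < n" using j by auto
            obtain m where m: "m < n" "v p \<in> Cs!m" "v j \<in> Cs!m" using edge[OF j(3)] by blast
            have "m = p \<or> m = k" using vonly[OF pn m(1) m(2)] sp by auto
            moreover have "m = j \<or> m = Suc j" using vonly[OF jn m(1) m(3)] j n(2) by (auto simp: s_def)
            ultimately have "j = k" using j n(2) p_def by (auto split: if_splits)
            thus "x \<in> {ws ! k}" using j wk by simp
          qed
        qed
      qed
    qed
  qed
qed

theorem mainTheorem8:
  fixes V :: "'a set" and E :: "'a set set"
  assumes "graph V E"
    and "cycle_of_cliques V E"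
  shows "int (Zplus V E) \<le> int (card V) - int (cc V E) + 2"
proof -
  have fin: "finite V" using assms(1) by (simp add: graph_def)
  obtain Cs where Cs: "Cs \<noteq> []" "distinct Cs" "length Cs = cc V E"
    "clique_covering V E (set Cs)" "\<forall>C\<in>set Cs. maximal_clique V E C"
    "\<forall>i<length Cs. \<forall>j<length Cs. i \<noteq> j \<longrightarrow>
            (Cs ! i \<inter> Cs ! j \<noteq> {} \<longleftrightarrow>
               (j = Suc i mod length Cs \<or> i = Suc j mod length Cs))"
    using assms(2) unfolding cycle_of_cliques_def by blast
  define n where "n = length Cs"
  have ws: "\<exists>ws. set ws \<subseteq> V \<and> distinct ws \<and> length ws + 2 \<ge> n \<and>
     (\<forall>k<length ws. \<exists>u\<in>V - set (drop k ws). {x \<in> set (drop k ws). {u,x}\<in>E} = {ws!k})"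
  proof (cases "n \<ge> 4")
    case True
    have "\<exists>ws. set ws \<subseteq> V \<and> distinct ws \<and> length ws = n - 2 \<and>
     (\<forall>k<length ws. \<exists>u\<in>V - set (drop k ws). {x \<in> set (drop k ws). {u,x}\<in>E} = {ws!k})"
    proof (rule cyc_vertices[of n Cs])
      show "n = length Cs" "4 \<le> n" using True n_def by auto
      show "\<forall>i<n. \<forall>j<n. i \<noteq> j \<longrightarrow>
            (Cs ! i \<inter> Cs ! j \<noteq> {} \<longleftrightarrow> (j = Suc i mod n \<or> i = Suc j mod n))"
        using Cs(6) n_def by simp
      show "\<forall>C\<in>set Cs. clique V E C" "\<forall>e\<in>E. \<exists>C\<in>set Cs. e \<subseteq> C"
        using Cs(4) unfolding clique_covering_def by auto
    qed
    then obtain ws where "set ws \<subseteq> V \<and> distinct ws \<and> length ws = n - 2 \<and>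
     (\<forall>k<length ws. \<exists>u\<in>V - set (drop k ws). {x \<in> set (drop k ws). {u,x}\<in>E} = {ws!k})" by blast
    then show ?thesis by (intro exI[of _ ws]) auto
  next
    case False
    show ?thesis
    proof (cases "n \<le> 2")
      case True
      then show ?thesis by (intro exI[of _ "[]"]) auto
    next
      case False2: False
      hence n3: "n = 3" using False by auto
      have ne: "Cs!0 \<inter> Cs!1 \<noteq> {}" using Cs(6) n3 n_def by auto
      then obtain y where y: "y \<in> Cs!0" "y \<in> Cs!1" by auto
      have m0: "maximal_clique V E (Cs!0)" and c1: "clique V E (Cs!1)"
        using Cs(5) n3 n_def by (auto simp: maximal_clique_def)
      have "Cs!0 \<noteq> Cs!1" using Cs(2) n3 n_def nth_eq_iff_index_eq by fastforce
      hence "\<not> Cs!0 \<subseteq> Cs!1" using m0 c1 unfolding maximal_clique_def by blast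
      then obtain x where x: "x \<in> Cs!0" "x \<notin> Cs!1" by auto
      have xy: "x \<noteq> y" using x y by auto
      have E: "{x, y} \<in> E" using m0 x y xy unfolding maximal_clique_def clique_def by auto
      have V: "x \<in> V" "y \<in> V" using m0 x y unfolding maximal_clique_def clique_def by auto
      show ?thesis
        by (rule exI[of _ "[y]"]) (use E V xy n3 in auto)
    qed
  qed
  then obtain ws where w: "set ws \<subseteq> V" "distinct ws" "length ws + 2 \<ge> n"
     "\<forall>k<length ws. \<exists>u\<in>V - set (drop k ws). {x \<in> set (drop k ws). {u,x}\<in>E} = {ws!k}"
    by blast
  have "Zplus V E \<le> card (V - set ws)"
    using chain[OF w(1) w(2) w(4)] w(1) by (intro zplus_le) auto
  also have "card (V - set ws) = card V - length ws"
    using w fin by (simp add: card_Diff_subset distinct_card)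
  finally have "Zplus V E \<le> card V - length ws" .
  moreover have "length ws \<le> card V" using w fin by (metis card_mono distinct_card)
  ultimately show ?thesis using w(3) Cs(3) n_def by linarith
qed

end
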